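(* Let $(a_N)$ be a sequence of positive numbers and, for each $N$, let $P_{N,a_N}$ be the probability on sequences $(n_j)_{j\ge0}$ of nonnegative integers with $\sum_jn_j=N$ given by $P_{N,a_N}((n_j))\propto e^{-a_N\sum_jjn_j}$. Let $\lambda_N=1-m_N/N$ with integers $0\le m_N\le N$, and suppose $\lambda_N\to\lambda\le1$ and $(1-\lambda_N)Na_N\to\infty$. Then $$P_{N,a_N}\Big(\frac{n_0}N\ge\lambda_N\Big)=e^{-(1+\epsilon_N)A_{N1}(\lambda_N)},\qquad A_{N1}(\lambda_N)=\frac{e^{-Na_N}\big(e^{\lambda_NNa_N}-1\big)}{e^{a_N}-1},$$ where $0<\epsilon_N<-\ln\big(1-e^{-(1-\lambda_N)Na_N}\big)\to0$.
   Context: This is the canonical ensemble of $N$ noninteracting bosons in a one-dimensional harmonic trap, $n_0$ being the ground-state occupation. *)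

theory Defs
  imports "HOL-Analysis.Analysis"
begin

definition support :: "(nat \<Rightarrow> nat) \<Rightarrow> nat set" where
  "support n = {j. n j \<noteq> 0}"

definition configs :: "nat \<Rightarrow> (nat \<Rightarrow> nat) set" where
  "configs N = {n. finite (support n) \<and> (\<Sum>j\<in>support n. n j) = N}"

definition energy :: "(nat \<Rightarrow> nat) \<Rightarrow> nat" where
  "energy n = (\<Sum>j\<in>support n. j * n j)"

definition weight :: "real \<Rightarrow> (nat \<Rightarrow> nat) \<Rightarrow> real" where
  "weight a n = exp (- a * real (energy n))"

definition canon_prob :: "nat \<Rightarrow> real \<Rightarrow> ((nat \<Rightarrow> nat) \<Rightarrow> bool) \<Rightarrow> real" where
  "canon_prob N a E = infsum (weight a) {n \<in> configs N. E n} / infsum (weight a) (configs N)"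

definition A_N1 :: "nat \<Rightarrow> real \<Rightarrow> real \<Rightarrow> real" where
  "A_N1 N a l = exp (- real N * a) * (exp (l * real N * a) - 1) / (exp a - 1)"

end

theory Submission
  imports Defs "HOL-Real_Asymp.Real_Asymp"
begin


lemma sum_K:
  assumes "support n \<subseteq> {..<K}" "\<And>j. f j 0 = 0"
  shows "(\<Sum>j\<in>support n. f j (n j)) = (\<Sum>j<K. f j (n j))"
  apply (rule sum.mono_neutral_left)
  using assms by (auto simp: support_def)

lemma decomp:
  assumes "support n \<subseteq> {..<Suc K}"
  shows "(\<Sum>j\<in>support n. n j) = n 0 + (\<Sum>j<K. n (Suc j))"
    and "energy n = (\<Sum>j<K. Suc j * n (Suc j))"
proof -
  have "(\<Sum>j\<in>support n. n j) = (\<Sum>j<Suc K. n j)"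
    using sum_K[OF assms, of "\<lambda>j x. x"] by simp
  then show "(\<Sum>j\<in>support n. n j) = n 0 + (\<Sum>j<K. n (Suc j))"
    by (simp only: sum.lessThan_Suc_shift)
  have "energy n = (\<Sum>j<Suc K. j * n j)"
    unfolding energy_def using sum_K[OF assms, of "\<lambda>j x. j * x"] by simp
  also have "\<dots> = 0 * n 0 + (\<Sum>j<K. Suc j * n (Suc j))"
    by (rule sum.lessThan_Suc_shift)
  finally show "energy n = (\<Sum>j<K. Suc j * n (Suc j))" by simp
qed

lemma fin_K: "finite (support n) \<Longrightarrow> \<exists>K. support n \<subseteq> {..<Suc K}"
  by (metis finite_nat_iff_bounded lessThan_Suc_eq_insert_0 subset_insertI2 finite_lessThan finite_subset lessThan_subset_iff
      le_add2 lessThan_Suc subset_trans)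

lemma supp_upd: "support (n(0 := x)) \<subseteq> insert 0 (support n)"
  by (auto simp: support_def)

lemma add0:
  assumes "n \<in> configs M"
  shows "n(0 := n 0 + k) \<in> configs (M + k)" "energy (n(0 := n 0 + k)) = energy n"
proof -
  have fin: "finite (support n)" and s: "(\<Sum>j\<in>support n. n j) = M" using assms by (auto simp: configs_def)
  obtain K where K: "support n \<subseteq> {..<Suc K}" using fin_K[OF fin] by blast
  let ?n = "n(0 := n 0 + k)"
  have K': "support ?n \<subseteq> {..<Suc K}" using K supp_upd by fastforce
  have fin': "finite (support ?n)" using K' finite_subset by blast
  show "?n \<in> configs (M + k)" using decomp(1)[OF K] decomp(1)[OF K'] s fin' by (simp add: configs_def)
  show "energy ?n = energy n" using decomp(2)[OF K] decomp(2)[OF K'] by simp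
qed

lemma sub0:
  assumes "n \<in> configs (M + k)" "k \<le> n 0"
  shows "n(0 := n 0 - k) \<in> configs M" "energy (n(0 := n 0 - k)) = energy n"
proof -
  have fin: "finite (support n)" and s: "(\<Sum>j\<in>support n. n j) = M + k" using assms by (auto simp: configs_def)
  obtain K where K: "support n \<subseteq> {..<Suc K}" using fin_K[OF fin] by blast
  let ?n = "n(0 := n 0 - k)"
  have K': "support ?n \<subseteq> {..<Suc K}" using K supp_upd by fastforce
  have fin': "finite (support ?n)" using K' finite_subset by blast
  show "?n \<in> configs M" using decomp(1)[OF K] decomp(1)[OF K'] s fin' assms(2) by (simp add: configs_def)
  show "energy ?n = energy n" using decomp(2)[OF K] decomp(2)[OF K'] by simp
qed

definition shift :: "(nat \<Rightarrow> nat) \<Rightarrow> nat \<Rightarrow> nat" where "shift n = (\<lambda>j. n (Suc j))"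
definition unshift :: "(nat \<Rightarrow> nat) \<Rightarrow> nat \<Rightarrow> nat" where
  "unshift n = (\<lambda>j. case j of 0 \<Rightarrow> 0 | Suc i \<Rightarrow> n i)"

lemma shift_unshift[simp]: "shift (unshift n) = n"
  by (simp add: shift_def unshift_def)

lemma unshift_shift: "n 0 = 0 \<Longrightarrow> unshift (shift n) = n"
  by (auto simp: shift_def unshift_def fun_eq_iff split: nat.split)

lemma unshift0[simp]: "unshift n 0 = 0" by (simp add: unshift_def)

lemma shift_cfg:
  assumes "n \<in> configs N" "n 0 = 0"
  shows "shift n \<in> configs N" "energy n = energy (shift n) + N"
proof -
  have fin: "finite (support n)" and s: "(\<Sum>j\<in>support n. n j) = N" using assms by (auto simp: configs_def)
  obtain K where K: "support n \<subseteq> {..<Suc K}" using fin_K[OF fin] by blast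
  have K': "support (shift n) \<subseteq> {..<K}" using K by (auto simp: support_def shift_def)
  have fin': "finite (support (shift n))" using K' finite_subset by blast
  have t: "(\<Sum>j\<in>support (shift n). shift n j) = (\<Sum>j<K. n (Suc j))"
    using sum_K[OF K', of "\<lambda>j x. x"] by (simp add: shift_def)
  have e: "energy (shift n) = (\<Sum>j<K. j * n (Suc j))"
    unfolding energy_def using sum_K[OF K', of "\<lambda>j x. j * x"] by (simp add: shift_def)
  show "shift n \<in> configs N" using t decomp(1)[OF K] s assms(2) fin' by (simp add: configs_def)
  have "energy n = (\<Sum>j<K. j * n (Suc j)) + (\<Sum>j<K. n (Suc j))"
    using decomp(2)[OF K] by (simp add: sum.distrib)
  then show "energy n = energy (shift n) + N" using e decomp(1)[OF K] s assms(2) by simp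
qed

lemma unshift_cfg:
  assumes "n \<in> configs N"
  shows "unshift n \<in> configs N"
proof -
  have fin: "finite (support n)" using assms by (auto simp: configs_def)
  obtain K where K: "support n \<subseteq> {..<Suc K}" using fin_K[OF fin] by blast
  have K': "support (unshift n) \<subseteq> {..<Suc (Suc K)}" using K
    by (auto simp: support_def unshift_def split: nat.splits) (metis Suc_less_eq gr0_implies_Suc in_mono mem_Collect_eq lessThan_iff)
  have fin': "finite (support (unshift n))" using K' finite_subset by blast
  have "shift (unshift n) \<in> configs N" using assms by simp
  then have "(\<Sum>j\<in>support (shift (unshift n)). shift (unshift n) j) = N" by (simp add: configs_def)
  moreover have "support (shift (unshift n)) \<subseteq> {..<Suc K}" using K by simp
  ultimately have "(\<Sum>j<Suc K. unshift n (Suc j)) = N"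
    using sum_K[of "shift (unshift n)" "Suc K" "\<lambda>j x. x"] by (simp add: shift_def)
  then show ?thesis using decomp(1)[OF K'] fin' by (simp add: configs_def)
qed

lemma configs0: "configs 0 = {\<lambda>_. 0}"
proof -
  { fix n assume "n \<in> configs 0"
    then have "finite (support n)" "(\<Sum>j\<in>support n. n j) = 0" by (auto simp: configs_def)
    then have "support n = {}" by (auto simp: support_def)
    then have "n = (\<lambda>_. 0)" by (auto simp: support_def) }
  moreover have "(\<lambda>_. 0) \<in> configs 0" by (simp add: configs_def support_def)
  ultimately show ?thesis by blast
qed

lemma energy0[simp]: "energy (\<lambda>_. 0) = 0" by (simp add: energy_def support_def)



definition C :: "real \<Rightarrow> nat \<Rightarrow> real" where
  "C a N = 1 / (\<Prod>k\<in>{1..N}. 1 - exp (- a * real k))"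

lemma factor_pos: "a > 0 \<Longrightarrow> k \<ge> 1 \<Longrightarrow> 0 < 1 - exp (- a * real k)"
  by simp

lemma prodC_pos: "a > 0 \<Longrightarrow> 0 < (\<Prod>k\<in>{1..N}. 1 - exp (- a * real k))"
  by (rule prod_pos) (auto intro: factor_pos)

lemma C_pos: "a > 0 \<Longrightarrow> 0 < C a N"
  using prodC_pos by (simp add: C_def)

lemma C_Suc: "C a (Suc M) = C a M / (1 - exp (- a * real (Suc M)))"
  by (simp add: C_def prod.cl_ivl_Suc)

lemma C_rec: assumes "a > 0" shows "C a M + exp (- a * real (Suc M)) * C a (Suc M) = C a (Suc M)"
proof -
  have p: "0 < 1 - exp (- a * real (Suc M))" using factor_pos[OF assms, of "Suc M"] by simp
  show ?thesis unfolding C_Suc using p by (simp add: field_simps)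
qed

lemma weight_shift:
  assumes "n \<in> configs N" "n 0 = 0"
  shows "weight a n = exp (- a * real N) * weight a (shift n)"
  using shift_cfg(2)[OF assms] by (simp add: weight_def algebra_simps flip: exp_add)

lemma weight_nonneg: "0 \<le> weight a n" by (simp add: weight_def)

lemma bound:
  assumes a: "a > 0"
  shows "finite F \<Longrightarrow> F \<subseteq> configs N \<Longrightarrow> sum (weight a) F \<le> C a N"
proof (induction N arbitrary: F)
  case 0
  then have "F \<subseteq> {\<lambda>_. 0}" using configs0 by simp
  then have "F = {} \<or> F = {\<lambda>_. 0}" by blast
  then show ?case by (auto simp: C_def weight_def)
next
  case (Suc M)
  have main: "\<forall>F. finite F \<and> F \<subseteq> configs (Suc M) \<and> (\<forall>n\<in>F. energy n \<le> E) \<longrightarrow> sum (weight a) F \<le> C a (Suc M)" for E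
  proof (induction E rule: less_induct)
    case (less E)
    show ?case
    proof (intro allI impI, elim conjE)
      fix F assume fin: "finite F" and sub: "F \<subseteq> configs (Suc M)" and en: "\<forall>n\<in>F. energy n \<le> E"
      define F1 where "F1 = {n\<in>F. n 0 \<noteq> 0}"
      define F0 where "F0 = {n\<in>F. n 0 = 0}"
      have split: "sum (weight a) F = sum (weight a) F1 + sum (weight a) F0"
        unfolding F1_def F0_def using fin by (subst sum.union_disjoint[symmetric]) (auto intro: sum.cong)
      define dec where "dec = (\<lambda>n::nat\<Rightarrow>nat. n(0 := n 0 - 1))"
      have dec: "dec n \<in> configs M" "energy (dec n) = energy n" if "n \<in> F1" for n
        using sub0[of n M 1] that sub unfolding F1_def dec_def by auto
      have rec: "n = (dec n)(0 := dec n 0 + 1)" if "n \<in> F1" for n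
        using that unfolding F1_def dec_def by (auto simp: fun_eq_iff)
      have injd: "inj_on dec F1"
        by (rule inj_on_inverseI[where g = "\<lambda>m. m(0 := m 0 + 1)"]) (rule rec[symmetric])
      have "sum (weight a) (dec ` F1) = sum (weight a \<circ> dec) F1" by (rule sum.reindex[OF injd])
      also have "\<dots> = sum (weight a) F1" by (rule sum.cong) (auto simp: weight_def dec(2))
      finally have "sum (weight a) F1 = sum (weight a) (dec ` F1)" by simp
      also have "\<dots> \<le> C a M"
      proof (rule Suc.IH)
        show "finite (dec ` F1)" using fin unfolding F1_def by simp
        show "dec ` F1 \<subseteq> configs M" using dec(1) by blast
      qed
      finally have s1: "sum (weight a) F1 \<le> C a M" .
      have injs: "inj_on shift F0"
      proof
        fix x y assume "x \<in> F0" "y \<in> F0" "shift x = shift y"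
        then have "unshift (shift x) = unshift (shift y)" by simp
        moreover have "x 0 = 0" "y 0 = 0" using \<open>x \<in> F0\<close> \<open>y \<in> F0\<close> unfolding F0_def by auto
        ultimately show "x = y" using unshift_shift by simp
      qed
      have s0: "sum (weight a) F0 \<le> exp (- a * real (Suc M)) * C a (Suc M)"
      proof (cases "F0 = {}")
        case True then show ?thesis using C_pos[OF a, of "Suc M"] by (simp add: less_imp_le)
      next
        case False
        then obtain n0 where "n0 \<in> F0" by blast
        then have "Suc M \<le> energy n0" using shift_cfg(2)[of n0 "Suc M"] sub unfolding F0_def by auto
        moreover have "energy n0 \<le> E" using en \<open>n0 \<in> F0\<close> unfolding F0_def by simp
        ultimately have EM: "Suc M \<le> E" by linarith
        have sh: "shift n \<in> configs (Suc M)" "energy (shift n) \<le> E - Suc M" if "n \<in> F0" for n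
        proof -
          have "n \<in> configs (Suc M)" "n 0 = 0" "energy n \<le> E" using that sub en unfolding F0_def by auto
          then show "shift n \<in> configs (Suc M)" "energy (shift n) \<le> E - Suc M"
            using shift_cfg[of n "Suc M"] by auto
        qed
        have "sum (weight a) F0 = (\<Sum>n\<in>F0. exp (- a * real (Suc M)) * weight a (shift n))"
          using weight_shift[of _ "Suc M" a] sub unfolding F0_def by (intro sum.cong) auto
        also have "\<dots> = exp (- a * real (Suc M)) * sum (weight a) (shift ` F0)"
          by (simp add: sum_distrib_left sum.reindex[OF injs])
        also have "\<dots> \<le> exp (- a * real (Suc M)) * C a (Suc M)"
          apply (rule mult_left_mono)
           apply (rule less(1)[rule_format, of "E - Suc M"])
          using EM fin sh unfolding F0_def by auto
        finally show ?thesis .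
      qed
      show "sum (weight a) F \<le> C a (Suc M)"
        using split s1 s0 C_rec[OF a, of M] by linarith
    qed
  qed
  have "\<forall>n\<in>F. energy n \<le> (\<Sum>n\<in>F. energy n)"
    using Suc.prems(1) by (auto intro: member_le_sum)
  then show ?case using main[of "\<Sum>n\<in>F. energy n"] Suc.prems by blast
qed

lemma summ: "a > 0 \<Longrightarrow> weight a summable_on configs N"
  apply (rule nonneg_bdd_above_summable_on)
   apply (simp add: weight_nonneg)
  apply (rule bdd_aboveI[where M = "C a N"])
  using bound by auto



definition Z :: "real \<Rightarrow> nat \<Rightarrow> real" where "Z a N = infsum (weight a) (configs N)"

lemma Z0: "Z a 0 = 1"
  by (simp add: Z_def configs0 weight_def)

lemma Z_Suc:
  assumes a: "a > 0"
  shows "Z a (Suc M) = Z a M + exp (- a * real (Suc M)) * Z a (Suc M)"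
proof -
  define F1 where "F1 = {n \<in> configs (Suc M). n 0 \<noteq> 0}"
  define F0 where "F0 = {n \<in> configs (Suc M). n 0 = 0}"
  have U: "configs (Suc M) = F1 \<union> F0" "F1 \<inter> F0 = {}" unfolding F1_def F0_def by auto
  have s1: "weight a summable_on F1" "weight a summable_on F0"
    using summable_on_subset[OF summ[OF a]] U by auto
  have "Z a (Suc M) = infsum (weight a) F1 + infsum (weight a) F0"
    unfolding Z_def U(1) by (rule infsum_Un_disjoint[OF s1 U(2)])
  moreover have "infsum (weight a) F1 = Z a M"
    unfolding Z_def
  proof (rule infsum_reindex_bij_witness[where j = "\<lambda>n. n(0 := n 0 - 1)" and i = "\<lambda>n. n(0 := n 0 + 1)"])
    fix n assume n: "n \<in> F1"
    then show "(n(0 := n 0 - 1))(0 := (n(0 := n 0 - 1)) 0 + 1) = n" unfolding F1_def by (auto simp: fun_eq_iff)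
    show "n(0 := n 0 - 1) \<in> configs M" using sub0(1)[of n M 1] n unfolding F1_def by auto
    show "weight a (n(0 := n 0 - 1)) = weight a n" using sub0(2)[of n M 1] n unfolding F1_def by (auto simp: weight_def)
  next
    fix n assume n: "n \<in> configs M"
    then show "(n(0 := n 0 + 1))(0 := (n(0 := n 0 + 1)) 0 - 1) = n" by (auto simp: fun_eq_iff)
    show "n(0 := n 0 + 1) \<in> F1" using add0(1)[OF n, of 1] unfolding F1_def by auto
  qed
  moreover have "infsum (weight a) F0 = infsum (\<lambda>n. exp (- a * real (Suc M)) * weight a n) (configs (Suc M))"
  proof (rule infsum_reindex_bij_witness[where j = shift and i = unshift])
    fix n assume n: "n \<in> F0"
    then show "unshift (shift n) = n" using unshift_shift unfolding F0_def by auto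
    show "shift n \<in> configs (Suc M)" using shift_cfg(1)[of n "Suc M"] n unfolding F0_def by auto
    show "exp (- a * real (Suc M)) * weight a (shift n) = weight a n"
      using weight_shift[of n "Suc M" a] n unfolding F0_def by auto
  next
    fix n assume n: "n \<in> configs (Suc M)"
    show "shift (unshift n) = n" by simp
    show "unshift n \<in> F0" using unshift_cfg[OF n] unfolding F0_def by simp
  qed
  moreover have "\<dots> = exp (- a * real (Suc M)) * Z a (Suc M)"
    unfolding Z_def by (rule infsum_cmult_right) (rule summ[OF a])
  ultimately show ?thesis by simp
qed

lemma Z_val: assumes a: "a > 0" shows "Z a N * (\<Prod>k\<in>{1..N}. 1 - exp (- a * real k)) = 1"
proof (induction N)
  case 0 then show ?case by (simp add: Z0)
next
  case (Suc M)
  have h: "Z a (Suc M) * (1 - exp (- a * real (Suc M))) = Z a M"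
    using Z_Suc[OF a, of M] by (simp add: algebra_simps)
  have eq: "Z a (Suc M) * (\<Prod>k\<in>{1..Suc M}. 1 - exp (- a * real k)) = (Z a (Suc M) * (1 - exp (- a * real (Suc M)))) * (\<Prod>k\<in>{1..M}. 1 - exp (- a * real k))"
    by (simp add: prod.cl_ivl_Suc mult_ac)
  show ?case by (simp only: eq h Suc.IH)
qed

lemma Z_pos: "a > 0 \<Longrightarrow> Z a N > 0"
  using Z_val[of a N] prodC_pos[of a N] by (metis zero_less_mult_pos2 zero_less_one)

lemma event_sum:
  assumes "m \<le> N"
  shows "infsum (weight a) {n \<in> configs N. N - m \<le> n 0} = Z a m"
  unfolding Z_def
proof (rule infsum_reindex_bij_witness[where j = "\<lambda>n. n(0 := n 0 - (N - m))" and i = "\<lambda>n. n(0 := n 0 + (N - m))"])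
  have e: "m + (N - m) = N" using assms by simp
  fix n assume n: "n \<in> {n \<in> configs N. N - m \<le> n 0}"
  then show "(n(0 := n 0 - (N - m)))(0 := (n(0 := n 0 - (N - m))) 0 + (N - m)) = n" by (auto simp: fun_eq_iff)
  show "n(0 := n 0 - (N - m)) \<in> configs m" using sub0(1)[of n m "N - m"] n e by auto
  show "weight a (n(0 := n 0 - (N - m))) = weight a n" using sub0(2)[of n m "N - m"] n e by (auto simp: weight_def)
next
  have e: "m + (N - m) = N" using assms by simp
  fix n assume n: "n \<in> configs m"
  then show "(n(0 := n 0 + (N - m)))(0 := (n(0 := n 0 + (N - m))) 0 - (N - m)) = n" by (auto simp: fun_eq_iff)
  show "n(0 := n 0 + (N - m)) \<in> {n \<in> configs N. N - m \<le> n 0}" using add0(1)[OF n, of "N - m"] e by auto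
qed

lemma prob_val:
  assumes a: "a > 0" and mN: "m \<le> N" and N: "N > 0"
  shows "canon_prob N a (\<lambda>n. real (n 0) / real N \<ge> 1 - real m / real N)
        = (\<Prod>k\<in>{Suc m..N}. 1 - exp (- a * real k))"
proof -
  have set: "{n \<in> configs N. real (n 0) / real N \<ge> 1 - real m / real N} = {n \<in> configs N. N - m \<le> n 0}"
  proof -
    have "real (n 0) / real N \<ge> 1 - real m / real N \<longleftrightarrow> N - m \<le> n 0" for n
    proof -
      have "1 - real m / real N = real (N - m) / real N" using mN N by (simp add: field_simps of_nat_diff)
      then show ?thesis using N by (simp add: divide_le_cancel)
    qed
    then show ?thesis by blast
  qed
  have split: "{1..N} = {1..m} \<union> {Suc m..N}" "{1..m} \<inter> {Suc m..N} = {}" using mN by auto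
  have pN: "(\<Prod>k\<in>{1..N}. 1 - exp (- a * real k)) = (\<Prod>k\<in>{1..m}. 1 - exp (- a * real k)) * (\<Prod>k\<in>{Suc m..N}. 1 - exp (- a * real k))"
    unfolding split(1) by (rule prod.union_disjoint) (use split in auto)
  have "canon_prob N a (\<lambda>n. real (n 0) / real N \<ge> 1 - real m / real N) = Z a m / Z a N"
    unfolding canon_prob_def set event_sum[OF mN] Z_def by simp
  also have "\<dots> = (\<Prod>k\<in>{Suc m..N}. 1 - exp (- a * real k))"
  proof -
    have pm: "(\<Prod>k\<in>{1..m}. 1 - exp (- a * real k)) > 0" by (rule prodC_pos[OF a])
    have pn: "(\<Prod>k\<in>{1..N}. 1 - exp (- a * real k)) > 0" by (rule prodC_pos[OF a])
    have zm: "Z a m = 1 / (\<Prod>k\<in>{1..m}. 1 - exp (- a * real k))"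
      by (rule eq_divide_imp[OF _ Z_val[OF a, of m]]) (use pm in linarith)
    have zn: "Z a N = 1 / (\<Prod>k\<in>{1..N}. 1 - exp (- a * real k))"
      by (rule eq_divide_imp[OF _ Z_val[OF a, of N]]) (use pn in linarith)
    have gen: "x \<noteq> 0 \<Longrightarrow> (1 / x) / (1 / (x * y)) = (y::real)" for x y by simp
    show ?thesis unfolding zm zn pN by (rule gen) (use pm in linarith)
  qed
  finally show ?thesis .
qed



lemma telesc:
  assumes "m \<le> N"
  shows "(exp a - 1) * (\<Sum>k\<in>{Suc m..N}. exp (- a * real k)) = exp (- a * real m) - exp (- a * real N)"
  using assms
proof (induction N rule: dec_induct)
  case base then show ?case by simp
next
  case (step N)
  have e: "exp a * exp (- a * real (Suc N)) = exp (- a * real N)"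
    by (simp add: algebra_simps flip: exp_add)
  have "(exp a - 1) * (\<Sum>k\<in>{Suc m..Suc N}. exp (- a * real k))
      = (exp a - 1) * (\<Sum>k\<in>{Suc m..N}. exp (- a * real k)) + (exp a - 1) * exp (- a * real (Suc N))"
    using step.hyps by (simp add: sum.cl_ivl_Suc distrib_left)
  also have "\<dots> = exp (- a * real m) - exp (- a * real (Suc N))"
    using step.IH e by (simp add: algebra_simps)
  finally show ?case .
qed

lemma A_val:
  assumes a: "a > 0" and mN: "m \<le> N" and N: "N > 0"
  shows "A_N1 N a (1 - real m / real N) = (\<Sum>k\<in>{Suc m..N}. exp (- a * real k))"
proof -
  have l: "(1 - real m / real N) * real N * a = real (N - m) * a"
    using N mN by (simp add: field_simps of_nat_diff)
  have "exp (- real N * a) * (exp (real (N - m) * a) - 1) = exp (- a * real m) - exp (- a * real N)"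
    using mN by (simp add: algebra_simps of_nat_diff flip: exp_add)
  moreover have "exp a - 1 > 0" using a by simp
  ultimately show ?thesis unfolding A_N1_def l using telesc[OF mN, of a]
    by (simp add: field_simps)
qed

lemma ln_ineqs:
  fixes x :: real
  assumes "0 < x" "x < 1"
  shows "x < - ln (1 - x)" "- ln (1 - x) < x + x * (- ln (1 - x))"
proof -
  show "x < - ln (1 - x)" using ln_diff_less[of "1 - x" 1] assms by simp
  have "- ln (1 - x) < x / (1 - x)" using ln_diff_less[of 1 "1 - x"] assms by simp
  then have "- ln (1 - x) * (1 - x) < x" using assms by (simp add: field_simps)
  then show "- ln (1 - x) < x + x * (- ln (1 - x))" by (simp add: algebra_simps)
qed

definition epsf :: "nat \<Rightarrow> real \<Rightarrow> nat \<Rightarrow> real" where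
  "epsf N a m = (if m < N then (- ln (\<Prod>k\<in>{Suc m..N}. 1 - exp (- a * real k))) / (\<Sum>k\<in>{Suc m..N}. exp (- a * real k)) - 1
     else (- ln (1 - exp (- a * real m))) / 2)"

lemma L_pos: "a > 0 \<Longrightarrow> m > 0 \<Longrightarrow> 0 < - ln (1 - exp (- a * real m))"
proof -
  assume "a > 0" "m > 0"
  then have "0 < exp (- a * real m)" "exp (- a * real m) < 1" by auto
  then show ?thesis by simp
qed

lemma key:
  assumes a: "a > 0" and m: "0 < m" "m \<le> N"
  shows "canon_prob N a (\<lambda>n. real (n 0) / real N \<ge> 1 - real m / real N)
          = exp (- (1 + epsf N a m) * A_N1 N a (1 - real m / real N))
        \<and> 0 < epsf N a m
        \<and> epsf N a m < - ln (1 - exp (- a * real m))"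
proof -
  have N: "N > 0" using m by simp
  define L where "L = - ln (1 - exp (- a * real m))"
  have Lp: "0 < L" unfolding L_def using L_pos[OF a m(1)] .
  define K where "K = {Suc m..N}"
  have P: "canon_prob N a (\<lambda>n. real (n 0) / real N \<ge> 1 - real m / real N) = (\<Prod>k\<in>K. 1 - exp (- a * real k))"
    unfolding K_def by (rule prob_val[OF a m(2) N])
  have A: "A_N1 N a (1 - real m / real N) = (\<Sum>k\<in>K. exp (- a * real k))"
    unfolding K_def by (rule A_val[OF a m(2) N])
  show ?thesis
  proof (cases "m < N")
    case False
    then have "K = {}" unfolding K_def by auto
    then show ?thesis using P A Lp False unfolding epsf_def L_def by simp
  next
    case True
    have Kne: "K \<noteq> {}" "finite K" unfolding K_def using True by auto
    have xk: "0 < exp (- a * real k)" "exp (- a * real k) < 1" "exp (- a * real k) \<le> exp (- a * real m)" if "k \<in> K" for k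
      using that a m unfolding K_def by auto
    have Lk: "- ln (1 - exp (- a * real k)) \<le> L" if "k \<in> K" for k
    proof -
      have m0: "0 < 1 - exp (- a * real m)" using a m by simp
      have "ln (1 - exp (- a * real m)) \<le> ln (1 - exp (- a * real k))"
        using xk[OF that] m0 by (subst ln_le_cancel_iff) auto
      then show ?thesis unfolding L_def by simp
    qed
    define S where "S = (\<Sum>k\<in>K. - ln (1 - exp (- a * real k)))"
    define A' where "A' = (\<Sum>k\<in>K. exp (- a * real k))"
    have lnP: "ln (\<Prod>k\<in>K. 1 - exp (- a * real k)) = - S"
    proof -
      have nz: "\<And>k. k \<in> K \<Longrightarrow> 1 - exp (- a * real k) \<noteq> 0" using xk(2) by fastforce
      show ?thesis using ln_prod[OF Kne(2) nz] unfolding S_def sum_negf by simp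
    qed
    have Ppos: "0 < (\<Prod>k\<in>K. 1 - exp (- a * real k))"
      using xk by (intro prod_pos) auto
    have A'pos: "0 < A'" unfolding A'_def using xk Kne by (intro sum_pos) auto
    have SA: "A' < S" unfolding A'_def S_def
      by (rule sum_strict_mono_ex1) (use Kne xk ln_ineqs in \<open>auto intro: less_imp_le\<close>)
    have "S < (\<Sum>k\<in>K. exp (- a * real k) + exp (- a * real k) * L)" unfolding S_def
    proof (rule sum_strict_mono[OF Kne(2) Kne(1)])
      fix k assume k: "k \<in> K"
      have "- ln (1 - exp (- a * real k)) < exp (- a * real k) + exp (- a * real k) * (- ln (1 - exp (- a * real k)))"
        using ln_ineqs(2) xk[OF k] by blast
      also have "\<dots> \<le> exp (- a * real k) + exp (- a * real k) * L"
        using Lk[OF k] xk[OF k] by (intro add_left_mono mult_left_mono) auto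
      finally show "- ln (1 - exp (- a * real k)) < exp (- a * real k) + exp (- a * real k) * L" .
    qed
    also have "\<dots> = (1 + L) * A'" unfolding A'_def by (simp add: sum.distrib sum_distrib_left algebra_simps)
    finally have SL: "S < (1 + L) * A'" .
    have eps: "epsf N a m = S / A' - 1" unfolding epsf_def using True lnP unfolding K_def A'_def by simp
    have "(1 + epsf N a m) * A' = S" unfolding eps using A'pos by (simp add: field_simps)
    moreover have "(\<Prod>k\<in>K. 1 - exp (- a * real k)) = exp (- S)"
      using lnP Ppos by (metis exp_ln)
    ultimately have 1: "canon_prob N a (\<lambda>n. real (n 0) / real N \<ge> 1 - real m / real N)
          = exp (- (1 + epsf N a m) * A_N1 N a (1 - real m / real N))"
      unfolding P A A'_def[symmetric] by (simp add: algebra_simps)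
    have 2: "0 < epsf N a m" unfolding eps using SA A'pos by (simp add: field_simps)
    have 3: "epsf N a m < L" unfolding eps using SL A'pos by (simp add: field_simps)
    show ?thesis using 1 2 3 unfolding L_def by blast
  qed
qed

lemma g_lim: "((\<lambda>x::real. - ln (1 - exp (- x))) \<longlongrightarrow> 0) at_top"
  by real_asymp

theorem proposition4:
  fixes a :: "nat \<Rightarrow> real" and m :: "nat \<Rightarrow> nat" and lam :: real
  assumes apos: "\<And>N. a N > 0"
    and mle: "\<And>N. m N \<le> N"
    and lim: "(\<lambda>N. 1 - real (m N) / real N) \<longlonglongrightarrow> lam"
    and lamle: "lam \<le> 1"
    and div: "filterlim (\<lambda>N. (1 - (1 - real (m N) / real N)) * real N * a N) at_top sequentially"
  shows "\<exists>\<epsilon> :: nat \<Rightarrow> real.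
     (\<forall>\<^sub>F N in sequentially.
        canon_prob N (a N) (\<lambda>n. real (n 0) / real N \<ge> 1 - real (m N) / real N)
          = exp (- (1 + \<epsilon> N) * A_N1 N (a N) (1 - real (m N) / real N))
        \<and> 0 < \<epsilon> N
        \<and> \<epsilon> N < - ln (1 - exp (- (1 - (1 - real (m N) / real N)) * real N * a N)))
     \<and> \<epsilon> \<longlonglongrightarrow> 0
     \<and> (\<lambda>N. - ln (1 - exp (- (1 - (1 - real (m N) / real N)) * real N * a N))) \<longlonglongrightarrow> 0"
proof -
  define e where "e N = (1 - (1 - real (m N) / real N)) * real N * a N" for N
  define Lf where "Lf N = - ln (1 - exp (- (1 - (1 - real (m N) / real N)) * real N * a N))" for N
  have Lfe: "Lf N = - ln (1 - exp (- e N))" for N unfolding Lf_def e_def by simp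
  have ev: "\<forall>\<^sub>F N in sequentially. e N > 0"
    using div unfolding e_def[symmetric] filterlim_at_top_dense by blast
  have pos: "N > 0 \<and> m N > 0" if "e N > 0" for N
  proof (rule ccontr)
    assume "\<not> (N > 0 \<and> m N > 0)"
    then have "N = 0 \<or> m N = 0" by auto
    then have "e N = 0" unfolding e_def by auto
    then show False using that by simp
  qed
  have eN: "e N = a N * real (m N)" if "N > 0" for N
    unfolding e_def using that by (simp add: field_simps)
  define eps where "eps N = epsf N (a N) (m N)" for N
  have main: "\<forall>\<^sub>F N in sequentially.
        canon_prob N (a N) (\<lambda>n. real (n 0) / real N \<ge> 1 - real (m N) / real N)
          = exp (- (1 + eps N) * A_N1 N (a N) (1 - real (m N) / real N))
        \<and> 0 < eps N \<and> eps N < Lf N"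
  proof (rule eventually_mono[OF ev])
    fix N assume "e N > 0"
    then have p: "N > 0" "m N > 0" using pos by auto
    have "Lf N = - ln (1 - exp (- a N * real (m N)))" unfolding Lfe eN[OF p(1)] by simp
    then show "canon_prob N (a N) (\<lambda>n. real (n 0) / real N \<ge> 1 - real (m N) / real N)
          = exp (- (1 + eps N) * A_N1 N (a N) (1 - real (m N) / real N))
        \<and> 0 < eps N \<and> eps N < Lf N"
      using key[OF apos p(2) mle] unfolding eps_def by simp
  qed
  have Llim: "Lf \<longlonglongrightarrow> 0"
  proof -
    have "filterlim (\<lambda>N. - ln (1 - exp (- e N))) (nhds 0) sequentially"
      by (rule filterlim_compose[OF g_lim]) (use div in \<open>simp add: e_def\<close>)
    then show ?thesis unfolding Lfe by simp
  qed
  have elim: "eps \<longlonglongrightarrow> 0"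
  proof (rule tendsto_sandwich[of "\<lambda>_. 0" eps sequentially Lf])
    show "\<forall>\<^sub>F N in sequentially. 0 \<le> eps N" using main by (rule eventually_mono) auto
    show "\<forall>\<^sub>F N in sequentially. eps N \<le> Lf N" using main by (rule eventually_mono) auto
  qed (use Llim in auto)
  show ?thesis
    apply (rule exI[of _ eps])
    using main elim Llim unfolding Lf_def by blast
qed


end
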